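(* Let $\mathcal{P}$ be a process LTS and $\mathcal{E}$ an environment LTS. For all image-finite environments $e$ and all image-finite processes $p,q$: (1) $p\le^{ji}_e q \iff p\le_e q \iff \mathcal{L}(p)\cap\mathcal{L}(e)\subseteq\mathcal{L}(q)\cap\mathcal{L}(e)$; (2) $p\simeq^{ji}_e q \iff p\simeq_e q \iff \mathcal{L}(p)\cap\mathcal{L}(e)=\mathcal{L}(q)\cap\mathcal{L}(e)$. The implications from left to right (from $p\le_e q$, resp. $p\simeq_e q$, to the formula conditions) hold also for $p,q,e$ that are not image-finite.
   Context: A labeled transition system (LTS) is a triple $\langle \mathrm{St},A,\to\rangle$ with states, actions, and transitions $s\xrightarrow{a}t$. A process LTS $\mathcal{P}=\langle \mathrm{Pr},A,\to\rangle$ has states called processes; an environment LTS $\mathcal{E}=\langle\mathrm{Env},A,\Rightarrow\rangle$ has states called environments, transitions $e\xRightarrow{a}e'$. A state is image-finite if every state reachable from it has, for each action $a$, only finitely many $a$-successors. A simulation is a nonempty relation $S$ on states such that $s\,S\,t$ and $s\xrightarrow{a}s'$ imply some $t\xrightarrow{a}t'$ with $s'\,S\,t'$; $s\le t$ iff some simulation relates $s$ to $t$. An $\mathcal{E}$-parameterized simulation on $\mathcal{P}$ is a family $(S_f)_{f\in\mathrm{Env}}$ of nonempty relations on $\mathrm{Pr}$ such that whenever $p\,S_e\,q$, $e\xRightarrow{a}e'$ and $p\xrightarrow{a}p'$, there is $q'$ with $q\xrightarrow{a}q'$ and $p'\,S_{e'}\,q'$. $p\le_e q$ iff some such family has $p\,S_e\,q$;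 $p\simeq_e q$ iff $p\le_e q$ and $q\le_e p$. The join LTS $\mathcal{P}\mathbin{\&}\mathcal{E}$ has states $p\mathbin{\&}e$ and transitions $p\mathbin{\&}e\xrightarrow{a}p'\mathbin{\&}e'$ iff $p\xrightarrow{a}p'$ and $e\xRightarrow{a}e'$. $p\le^{ji}_e q$ iff $p\mathbin{\&}e\le q\mathbin{\&}e$; $p\simeq^{ji}_e q$ iff $p\le^{ji}_e q$ and $q\le^{ji}_e p$. Positive formulas $\mathcal{L}$ over $A$: $\phi::=\top\mid\phi\wedge\phi\mid\langle a\rangle\phi$. Satisfaction: $s\models\top$ always; $s\models\phi_1\wedge\phi_2$ iff both; $s\models\langle a\rangle\phi$ iff some $s\xrightarrow{a}s'$ with $s'\models\phi$ (in the LTS containing $s$). $\mathcal{L}(s)=\{\phi\in\mathcal{L}: s\models\phi\}$. *)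

theory Defs
  imports Main
begin

type_synonym ('s, 'a) lts = "'s \<Rightarrow> 'a \<Rightarrow> 's \<Rightarrow> bool"

definition reachable :: "('s, 'a) lts \<Rightarrow> 's \<Rightarrow> 's \<Rightarrow> bool" where
  "reachable T = (\<lambda>x y. \<exists>a. T x a y)\<^sup>*\<^sup>*"

definition image_finite :: "('s, 'a) lts \<Rightarrow> 's \<Rightarrow> bool" where
  "image_finite T s \<longleftrightarrow> (\<forall>s'. reachable T s s' \<longrightarrow> (\<forall>a. finite {t. T s' a t}))"

definition simulation :: "('s, 'a) lts \<Rightarrow> ('s \<times> 's) set \<Rightarrow> bool" where
  "simulation T S \<longleftrightarrow> S \<noteq> {} \<and>
     (\<forall>s t a s'. (s, t) \<in> S \<longrightarrow> T s a s' \<longrightarrow> (\<exists>t'. T t a t' \<and> (s', t') \<in> S))"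

definition similar :: "('s, 'a) lts \<Rightarrow> 's \<Rightarrow> 's \<Rightarrow> bool" where
  "similar T s t \<longleftrightarrow> (\<exists>S. simulation T S \<and> (s, t) \<in> S)"

definition param_simulation ::
  "('p, 'a) lts \<Rightarrow> ('e, 'a) lts \<Rightarrow> ('e \<Rightarrow> ('p \<times> 'p) set) \<Rightarrow> bool" where
  "param_simulation P E S \<longleftrightarrow> (\<forall>f. S f \<noteq> {}) \<and>
     (\<forall>p q e e' a p'. (p, q) \<in> S e \<longrightarrow> E e a e' \<longrightarrow> P p a p' \<longrightarrow>
        (\<exists>q'. P q a q' \<and> (p', q') \<in> S e'))"

definition param_le :: "('p, 'a) lts \<Rightarrow> ('e, 'a) lts \<Rightarrow> 'e \<Rightarrow> 'p \<Rightarrow> 'p \<Rightarrow> bool" where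
  "param_le P E e p q \<longleftrightarrow> (\<exists>S. param_simulation P E S \<and> (p, q) \<in> S e)"

definition param_eq :: "('p, 'a) lts \<Rightarrow> ('e, 'a) lts \<Rightarrow> 'e \<Rightarrow> 'p \<Rightarrow> 'p \<Rightarrow> bool" where
  "param_eq P E e p q \<longleftrightarrow> param_le P E e p q \<and> param_le P E e q p"

definition join :: "('p, 'a) lts \<Rightarrow> ('e, 'a) lts \<Rightarrow> ('p \<times> 'e, 'a) lts" where
  "join P E = (\<lambda>(p, e) a (p', e'). P p a p' \<and> E e a e')"

definition ji_le :: "('p, 'a) lts \<Rightarrow> ('e, 'a) lts \<Rightarrow> 'e \<Rightarrow> 'p \<Rightarrow> 'p \<Rightarrow> bool" where
  "ji_le P E e p q \<longleftrightarrow> similar (join P E) (p, e) (q, e)"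

definition ji_eq :: "('p, 'a) lts \<Rightarrow> ('e, 'a) lts \<Rightarrow> 'e \<Rightarrow> 'p \<Rightarrow> 'p \<Rightarrow> bool" where
  "ji_eq P E e p q \<longleftrightarrow> ji_le P E e p q \<and> ji_le P E e q p"

datatype 'a form = Top | Conj "'a form" "'a form" | Dia 'a "'a form"

fun sat :: "('s, 'a) lts \<Rightarrow> 's \<Rightarrow> 'a form \<Rightarrow> bool" where
  "sat T s Top = True"
| "sat T s (Conj \<phi> \<psi>) = (sat T s \<phi> \<and> sat T s \<psi>)"
| "sat T s (Dia a \<phi>) = (\<exists>s'. T s a s' \<and> sat T s' \<phi>)"

definition formulas :: "('s, 'a) lts \<Rightarrow> 's \<Rightarrow> 'a form set" where
  "formulas T s = {\<phi>. sat T s \<phi>}"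

end

theory Submission
  imports Defs
begin

lemma sat_join: "sat (join P E) (p, e) \<phi> = (sat P p \<phi> \<and> sat E e \<phi>)"
proof (induction \<phi> arbitrary: p e)
  case (Dia a \<phi>)
  show ?case
  proof
    assume "sat (join P E) (p, e) (Dia a \<phi>)"
    then obtain s' where "join P E (p, e) a s'" "sat (join P E) s' \<phi>" by auto
    then show "sat P p (Dia a \<phi>) \<and> sat E e (Dia a \<phi>)" using Dia
      by (cases s') (auto simp: join_def)
  next
    assume "sat P p (Dia a \<phi>) \<and> sat E e (Dia a \<phi>)"
    then obtain p' e' where "P p a p'" "sat P p' \<phi>" "E e a e'" "sat E e' \<phi>" by auto
    then show "sat (join P E) (p, e) (Dia a \<phi>)" using Dia
      by (auto simp: join_def intro!: exI[of _ "(p', e')"])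
  qed
qed auto

lemma sim_sat: "simulation T S \<Longrightarrow> (s, t) \<in> S \<Longrightarrow> sat T s \<phi> \<Longrightarrow> sat T t \<phi>"
proof (induction \<phi> arbitrary: s t)
  case (Dia a \<phi>)
  then obtain s' where "T s a s'" "sat T s' \<phi>" by auto
  with Dia obtain t' where "T t a t'" "(s', t') \<in> S" unfolding simulation_def by blast
  with Dia \<open>sat T s' \<phi>\<close> show ?case by auto
qed auto

lemma ji_form:
  assumes "ji_le P E e p q"
  shows "formulas P p \<inter> formulas E e \<subseteq> formulas P q \<inter> formulas E e"
proof -
  from assms obtain S where "simulation (join P E) S" "((p, e), (q, e)) \<in> S"
    unfolding ji_le_def similar_def by blast
  then show ?thesis using sim_sat[of "join P E" S "(p,e)" "(q,e)"]
    by (auto simp: formulas_def sat_join)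
qed

lemma param_ji:
  assumes "param_le P E e p q"
  shows "ji_le P E e p q"
proof -
  from assms obtain S where S: "param_simulation P E S" "(p, q) \<in> S e"
    unfolding param_le_def by blast
  define R where "R = {((p, f), (q, f')). f = f' \<and> (p, q) \<in> S f}"
  have "simulation (join P E) R"
    unfolding simulation_def
  proof (intro conjI allI impI)
    show "R \<noteq> {}" using S(2) by (auto simp: R_def)
  next
    fix s t a s'
    assume "(s, t) \<in> R" "join P E s a s'"
    then obtain p1 q1 f p1' f' where eq: "s = (p1, f)" "t = (q1, f)" "s' = (p1', f')"
      "(p1, q1) \<in> S f" "P p1 a p1'" "E f a f'"
      by (cases s; cases t; cases s') (auto simp: R_def join_def)
    then obtain q1' where "P q1 a q1'" "(p1', q1') \<in> S f'"
      using S(1) unfolding param_simulation_def by blast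
    then show "\<exists>t'. join P E t a t' \<and> (s', t') \<in> R"
      using eq by (auto simp: R_def join_def intro!: exI[of _ "(q1', f')"])
  qed
  moreover have "((p, e), (q, e)) \<in> R" using S(2) by (auto simp: R_def)
  ultimately show ?thesis unfolding ji_le_def similar_def by blast
qed

lemma image_finite_step: "image_finite T q \<Longrightarrow> T q a q' \<Longrightarrow> image_finite T q'"
  unfolding image_finite_def reachable_def
proof (intro allI impI)
  fix s' b
  assume h: "\<forall>s'. (\<lambda>x y. \<exists>a. T x a y)\<^sup>*\<^sup>* q s' \<longrightarrow> (\<forall>a. finite {t. T s' a t})"
    and "T q a q'" and r: "(\<lambda>x y. \<exists>a. T x a y)\<^sup>*\<^sup>* q' s'"
  have "(\<lambda>x y. \<exists>a. T x a y) q q'" using \<open>T q a q'\<close> by blast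
  then have "(\<lambda>x y. \<exists>a. T x a y)\<^sup>*\<^sup>* q s'" using r by (rule converse_rtranclp_into_rtranclp)
  then show "finite {t. T s' b t}" using h by blast
qed

lemma sat_conjs: "sat T s (foldr Conj xs Top) = (\<forall>\<phi>\<in>set xs. sat T s \<phi>)"
  by (induction xs) auto

definition Cf where "Cf P E e p q \<longleftrightarrow> (\<forall>\<phi>. sat P p \<phi> \<and> sat E e \<phi> \<longrightarrow> sat P q \<phi>)"

lemma Cf_step:
  assumes C: "Cf P E e p q" and fin: "image_finite P q" and ee: "E e a e'" and pp: "P p a p'"
  shows "\<exists>q'. P q a q' \<and> Cf P E e' p' q'"
proof (rule ccontr)
  assume nt: "\<not> ?thesis"
  have "\<forall>q'\<in>{q'. P q a q'}. \<exists>\<phi>. sat P p' \<phi> \<and> sat E e' \<phi> \<and> \<not> sat P q' \<phi>"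
  proof
    fix q' assume "q' \<in> {q'. P q a q'}"
    then have "\<not> Cf P E e' p' q'" using nt by blast
    then show "\<exists>\<phi>. sat P p' \<phi> \<and> sat E e' \<phi> \<and> \<not> sat P q' \<phi>" unfolding Cf_def by blast
  qed
  from bchoice[OF this] obtain g where g0: "\<forall>q'\<in>{q'. P q a q'}. sat P p' (g q') \<and> sat E e' (g q') \<and> \<not> sat P q' (g q')"
    by (elim exE)
  then have g: "\<And>q'. q' \<in> {q'. P q a q'} \<Longrightarrow> sat P p' (g q') \<and> sat E e' (g q') \<and> \<not> sat P q' (g q')"
    by (rule bspec)
  have "reachable P q q" unfolding reachable_def by simp
  then have "finite {q'. P q a q'}" using fin unfolding image_finite_def by simp
  then have fg: "finite (g ` {q'. P q a q'})" by (rule finite_imageI)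
  obtain xs where xs: "set xs = g ` {q'. P q a q'}"
    using finite_list[OF fg] by (elim exE)
  define \<psi> where "\<psi> = foldr Conj xs Top"
  have "sat P p' \<psi>" unfolding \<psi>_def sat_conjs xs using g by blast
  then have s1: "sat P p (Dia a \<psi>)" using pp by auto
  have "sat E e' \<psi>" unfolding \<psi>_def sat_conjs xs using g by blast
  then have s2: "sat E e (Dia a \<psi>)" using ee by auto
  have "sat P q (Dia a \<psi>)" using C s1 s2 unfolding Cf_def by blast
  then obtain q' where q': "P q a q'" "sat P q' \<psi>" by auto
  then have "sat P q' (g q')" unfolding \<psi>_def sat_conjs xs by blast
  with g q'(1) show False by blast
qed

lemma form_param:
  assumes fin: "image_finite P q"
    and inc: "formulas P p \<inter> formulas E e \<subseteq> formulas P q \<inter> formulas E e"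
  shows "param_le P E e p q"
proof -
  define S where "S = (\<lambda>f. {(p, q). (image_finite P q \<and> Cf P E f p q) \<or> p = q})"
  have "param_simulation P E S"
    unfolding param_simulation_def
  proof (intro conjI allI impI)
    fix f show "S f \<noteq> {}" by (auto simp: S_def)
  next
    fix p q e e' a p'
    assume h: "(p, q) \<in> S e" "E e a e'" "P p a p'"
    show "\<exists>q'. P q a q' \<and> (p', q') \<in> S e'"
    proof (cases "p = q")
      case True
      then show ?thesis using h(3) unfolding S_def by blast
    next
      case False
      then have fq: "image_finite P q" and c: "Cf P E e p q" using h(1) unfolding S_def by auto
      obtain q' where "P q a q'" "Cf P E e' p' q'" using Cf_step[OF c fq h(2) h(3)] by blast
      moreover have "image_finite P q'" using image_finite_step[OF fq \<open>P q a q'\<close>] .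
      ultimately show ?thesis unfolding S_def by blast
    qed
  qed
  moreover have "Cf P E e p q" unfolding Cf_def
  proof (intro allI impI)
    fix \<phi> assume "sat P p \<phi> \<and> sat E e \<phi>"
    then have "\<phi> \<in> formulas P p \<inter> formulas E e" unfolding formulas_def by blast
    then have "\<phi> \<in> formulas P q" using inc by blast
    then show "sat P q \<phi>" unfolding formulas_def by blast
  qed
  then have "(p, q) \<in> S e" using fin unfolding S_def by blast
  ultimately show ?thesis unfolding param_le_def by blast
qed

theorem theorem4p2:
  fixes P :: "('p, 'a) lts" and E :: "('e, 'a) lts"
  shows "(\<forall>e p q. image_finite E e \<longrightarrow> image_finite P p \<longrightarrow> image_finite P q \<longrightarrow>
            (ji_le P E e p q \<longleftrightarrow> param_le P E e p q) \<and>
            (param_le P E e p q \<longleftrightarrow>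
               formulas P p \<inter> formulas E e \<subseteq> formulas P q \<inter> formulas E e) \<and>
            (ji_eq P E e p q \<longleftrightarrow> param_eq P E e p q) \<and>
            (param_eq P E e p q \<longleftrightarrow>
               formulas P p \<inter> formulas E e = formulas P q \<inter> formulas E e))
       \<and> (\<forall>e p q. param_le P E e p q \<longrightarrow>
               formulas P p \<inter> formulas E e \<subseteq> formulas P q \<inter> formulas E e)
       \<and> (\<forall>e p q. param_eq P E e p q \<longrightarrow>
               formulas P p \<inter> formulas E e = formulas P q \<inter> formulas E e)"
proof -
  have A: "param_le P E e p q \<longleftrightarrow> ji_le P E e p q" if "image_finite P q" for e p q
  proof
    assume "param_le P E e p q" then show "ji_le P E e p q" by (rule param_ji)
  next
    assume "ji_le P E e p q"
    then have "formulas P p \<inter> formulas E e \<subseteq> formulas P q \<inter> formulas E e" by (rule ji_form)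
    then show "param_le P E e p q" using that by (rule form_param[rotated])
  qed
  have B: "param_le P E e p q \<Longrightarrow>
      formulas P p \<inter> formulas E e \<subseteq> formulas P q \<inter> formulas E e" for e p q
    by (rule ji_form[OF param_ji])
  show ?thesis
  proof (intro conjI allI impI)
    fix e p q
    assume "image_finite P p" "image_finite P q"
    then have Aq: "param_le P E e p q \<longleftrightarrow> ji_le P E e p q"
      and Ap: "param_le P E e q p \<longleftrightarrow> ji_le P E e q p" using A by blast+
    have Fq: "param_le P E e p q \<longleftrightarrow>
        formulas P p \<inter> formulas E e \<subseteq> formulas P q \<inter> formulas E e"
      using B form_param[OF \<open>image_finite P q\<close>] by (rule iffI)
    have Fp: "param_le P E e q p \<longleftrightarrow>
        formulas P q \<inter> formulas E e \<subseteq> formulas P p \<inter> formulas E e"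
      using B form_param[OF \<open>image_finite P p\<close>] by (rule iffI)
    show "ji_le P E e p q \<longleftrightarrow> param_le P E e p q" using Aq by simp
    show "param_le P E e p q \<longleftrightarrow>
        formulas P p \<inter> formulas E e \<subseteq> formulas P q \<inter> formulas E e" by (rule Fq)
    show "ji_eq P E e p q \<longleftrightarrow> param_eq P E e p q"
      unfolding ji_eq_def param_eq_def using Aq Ap by simp
    show "param_eq P E e p q \<longleftrightarrow>
        formulas P p \<inter> formulas E e = formulas P q \<inter> formulas E e"
      unfolding param_eq_def Fq Fp by (rule set_eq_subset[symmetric])
  next
    fix e p q
    assume "param_le P E e p q"
    then show "formulas P p \<inter> formulas E e \<subseteq> formulas P q \<inter> formulas E e" by (rule B)
  next
    fix e p q
    assume "param_eq P E e p q"
    show "formulas P p \<inter> formulas E e = formulas P q \<inter> formulas E e"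
    proof (rule subset_antisym)
      show "formulas P p \<inter> formulas E e \<subseteq> formulas P q \<inter> formulas E e"
        using \<open>param_eq P E e p q\<close> unfolding param_eq_def by (intro B) (elim conjE)
      show "formulas P q \<inter> formulas E e \<subseteq> formulas P p \<inter> formulas E e"
        using \<open>param_eq P E e p q\<close> unfolding param_eq_def by (intro B) (elim conjE)
    qed
  qed
qed

end
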